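(* Under the hypotheses: $N\ge M$, $d_i>0$ for all $i$, $\mathbf{P}\in\mathbb{Z}_{\ge0}^N$ with $P_N>0$, $\mathbf{L}\in\mathbb{R}^{N\times M}$ full rank with non-negative entries and $L_{N,j}>0$ for all $j$, let $l$ be the Poisson log-likelihood and $\mathbf{T}$ the multiplicative map defined in the context. Then: (i) a point $\tilde{\boldsymbol\alpha}\ge 0$ is the (unique) maximizer of $l$ on the non-negative orthant if and only if it satisfies the KKT conditions $\tilde\alpha_j\,\partial_j l(\tilde{\boldsymbol\alpha})=0$ for all $j$ and $\partial_j l(\tilde{\boldsymbol\alpha})\le 0$ whenever $\tilde\alpha_j=0$; in particular the maximizer is a fixed point of $\mathbf{T}$; (ii) if $\boldsymbol\alpha$ has all components strictly positive, then $\mathbf{T}(\boldsymbol\alpha)$ has all components strictly positive; hence if $\boldsymbol\alpha^{(0)}>0$ componentwise, all iterates $\boldsymbol\alpha^{(n+1)}=\mathbf{T}(\boldsymbol\alpha^{(n)})$ are strictly positive; (iii) a strictly positive $\boldsymbol\alpha$ is a fixed point of $\mathbf{T}$ only if it is the maximizer of $l$ on the non-negative orthant.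
   Context: $l(\boldsymbol\alpha)=\sum_{i=1}^N\big(P_i\log d_i-(\mathbf{L}\boldsymbol\alpha)_iP_i-d_i e^{-(\mathbf{L}\boldsymbol\alpha)_i}-\log(P_i!)\big)$ for $\boldsymbol\alpha\ge0$, with gradient $\partial_j l(\boldsymbol\alpha)=\sum_i L_{i,j}\big(d_ie^{-(\mathbf{L}\boldsymbol\alpha)_i}-P_i\big)$. The map $\mathbf{T}:\mathbb{R}^M\to\mathbb{R}^M$ is $$\mathbf{T}(\boldsymbol\alpha)_j=\frac{\big(\mathbf{L}^T(\mathbf{d}\odot e^{-\mathbf{L}\boldsymbol\alpha})\big)_j}{(\mathbf{L}^T\mathbf{P})_j}\,\alpha_j,$$ where $\odot$ is the componentwise product and $e^{-\mathbf{L}\boldsymbol\alpha}$ is taken componentwise; the denominators are positive under the hypotheses. *)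

theory Defs
  imports Complex_Main
begin

text \<open>Vectors are functions nat => real indexed by 0..<M (resp. 0..<N); the matrix L is
  nat => nat => real with row index i < N and column index j < M.
  The paper's last index N corresponds to index N - 1 here.\<close>

definition Lmul :: "nat \<Rightarrow> (nat \<Rightarrow> nat \<Rightarrow> real) \<Rightarrow> (nat \<Rightarrow> real) \<Rightarrow> nat \<Rightarrow> real" where
  "Lmul M L \<alpha> i = (\<Sum>j<M. L i j * \<alpha> j)"

definition loglik :: "nat \<Rightarrow> nat \<Rightarrow> (nat \<Rightarrow> nat \<Rightarrow> real) \<Rightarrow> (nat \<Rightarrow> real) \<Rightarrow> (nat \<Rightarrow> nat)
    \<Rightarrow> (nat \<Rightarrow> real) \<Rightarrow> real" where
  "loglik N M L d P \<alpha> =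
     (\<Sum>i<N. real (P i) * ln (d i) - Lmul M L \<alpha> i * real (P i)
             - d i * exp (- Lmul M L \<alpha> i) - ln (fact (P i)))"

definition grad :: "nat \<Rightarrow> nat \<Rightarrow> (nat \<Rightarrow> nat \<Rightarrow> real) \<Rightarrow> (nat \<Rightarrow> real) \<Rightarrow> (nat \<Rightarrow> nat)
    \<Rightarrow> (nat \<Rightarrow> real) \<Rightarrow> nat \<Rightarrow> real" where
  "grad N M L d P \<alpha> j = (\<Sum>i<N. L i j * (d i * exp (- Lmul M L \<alpha> i) - real (P i)))"

definition Tmap :: "nat \<Rightarrow> nat \<Rightarrow> (nat \<Rightarrow> nat \<Rightarrow> real) \<Rightarrow> (nat \<Rightarrow> real) \<Rightarrow> (nat \<Rightarrow> nat)
    \<Rightarrow> (nat \<Rightarrow> real) \<Rightarrow> nat \<Rightarrow> real" where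
  "Tmap N M L d P \<alpha> j =
     (\<Sum>i<N. L i j * (d i * exp (- Lmul M L \<alpha> i))) / (\<Sum>i<N. L i j * real (P i)) * \<alpha> j"

definition nonneg_vec :: "nat \<Rightarrow> (nat \<Rightarrow> real) \<Rightarrow> bool" where
  "nonneg_vec M \<alpha> \<longleftrightarrow> (\<forall>j<M. 0 \<le> \<alpha> j)"

definition pos_vec :: "nat \<Rightarrow> (nat \<Rightarrow> real) \<Rightarrow> bool" where
  "pos_vec M \<alpha> \<longleftrightarrow> (\<forall>j<M. 0 < \<alpha> j)"

definition is_maximizer :: "nat \<Rightarrow> nat \<Rightarrow> (nat \<Rightarrow> nat \<Rightarrow> real) \<Rightarrow> (nat \<Rightarrow> real) \<Rightarrow> (nat \<Rightarrow> nat)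
    \<Rightarrow> (nat \<Rightarrow> real) \<Rightarrow> bool" where
  "is_maximizer N M L d P \<alpha> \<longleftrightarrow> nonneg_vec M \<alpha> \<and>
     (\<forall>\<beta>. nonneg_vec M \<beta> \<longrightarrow> loglik N M L d P \<beta> \<le> loglik N M L d P \<alpha>)"

definition full_col_rank :: "nat \<Rightarrow> nat \<Rightarrow> (nat \<Rightarrow> nat \<Rightarrow> real) \<Rightarrow> bool" where
  "full_col_rank N M L \<longleftrightarrow>
     (\<forall>a. (\<forall>i<N. Lmul M L a i = 0) \<longrightarrow> (\<forall>j<M. a j = 0))"

end

theory Submission imports Defs begin

lemma exp_strict: fixes z::real assumes "z \<noteq> 0" shows "1 + z < exp z"
proof (cases "1 + z/2 \<ge> 0")
  case True
  have "exp z = exp (z/2)^2" by (simp add: power2_eq_square flip: exp_add)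
  moreover have "(1+z/2)^2 \<le> exp (z/2)^2" using True by (intro power_mono) auto
  moreover have "0 < z*z" using assms by (auto simp: zero_less_mult_iff linorder_neq_iff)
  then have "1 + z < (1+z/2)^2" by (simp add: power2_eq_square algebra_simps)
  ultimately show ?thesis by linarith
next
  case False
  then show ?thesis using exp_gt_zero[of z] by linarith
qed

lemma Lmul_upd: assumes "j < M"
  shows "Lmul M L (\<alpha>(j := \<alpha> j + t)) i = Lmul M L \<alpha> i + t * L i j"
proof -
  have "Lmul M L (\<alpha>(j := \<alpha> j + t)) i = (\<Sum>k<M. L i k * \<alpha> k + (if k = j then t * L i j else 0))"
    unfolding Lmul_def by (rule sum.cong) (auto simp: algebra_simps)
  also have "\<dots> = Lmul M L \<alpha> i + t * L i j" using assms
    by (simp add: sum.distrib Lmul_def)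
  finally show ?thesis .
qed

lemma Lmul_diff: "Lmul M L (\<lambda>k. a k - b k) i = Lmul M L a i - Lmul M L b i"
  unfolding Lmul_def by (simp add: algebra_simps sum_subtractf)

lemma term_ineq:
  fixes x y D p :: real assumes "0 < D"
  shows "(- y * p - D * exp (- y)) - (- x * p - D * exp (- x)) \<le> (D * exp (- x) - p) * (y - x)"
    and "x \<noteq> y \<Longrightarrow> (- y * p - D * exp (- y)) - (- x * p - D * exp (- x)) < (D * exp (- x) - p) * (y - x)"
proof -
  have e: "exp (-y) = exp (-x) * exp (x - y)" by (simp flip: exp_add)
  have "exp (-x) * (1 + (x - y)) \<le> exp (-x) * exp (x - y)" by (intro mult_left_mono) auto
  then have "D * (exp (-x) * (1 + (x - y))) \<le> D * exp (-y)" using assms e by (intro mult_left_mono) auto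
  then show "(- y * p - D * exp (- y)) - (- x * p - D * exp (- x)) \<le> (D * exp (- x) - p) * (y - x)"
    by (simp add: algebra_simps)
  assume "x \<noteq> y"
  then have "exp (-x) * (1 + (x - y)) < exp (-x) * exp (x - y)" by (intro mult_strict_left_mono exp_strict) auto
  then have "D * (exp (-x) * (1 + (x - y))) < D * exp (-y)" using assms e by (intro mult_strict_left_mono) auto
  then show "(- y * p - D * exp (- y)) - (- x * p - D * exp (- x)) < (D * exp (- x) - p) * (y - x)"
    by (simp add: algebra_simps)
qed

lemma grad_sum:
  "(\<Sum>i<N. (d i * exp (- Lmul M L a i) - real (P i)) * (Lmul M L b i - Lmul M L a i))
    = (\<Sum>j<M. grad N M L d P a j * (b j - a j))"
proof -
  have "(\<Sum>i<N. (d i * exp (- Lmul M L a i) - real (P i)) * (Lmul M L b i - Lmul M L a i))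
     = (\<Sum>i<N. \<Sum>j<M. (d i * exp (- Lmul M L a i) - real (P i)) * (L i j * (b j - a j)))"
    by (simp add: Lmul_def sum_distrib_left sum_subtractf[symmetric] right_diff_distrib)
  also have "\<dots> = (\<Sum>j<M. \<Sum>i<N. (d i * exp (- Lmul M L a i) - real (P i)) * (L i j * (b j - a j)))"
    by (rule sum.swap)
  also have "\<dots> = (\<Sum>j<M. grad N M L d P a j * (b j - a j))"
    unfolding grad_def sum_distrib_right by (intro sum.cong refl) (simp add: algebra_simps)
  finally show ?thesis .
qed

lemma conc:
  assumes dpos: "\<forall>i<N. 0 < d i"
  shows "loglik N M L d P b \<le> loglik N M L d P a + (\<Sum>j<M. grad N M L d P a j * (b j - a j))"
    and "(\<exists>i<N. Lmul M L a i \<noteq> Lmul M L b i) \<Longrightarrow>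
      loglik N M L d P b < loglik N M L d P a + (\<Sum>j<M. grad N M L d P a j * (b j - a j))"
proof -
  have eq: "loglik N M L d P b - loglik N M L d P a =
    (\<Sum>i<N. (- Lmul M L b i * real (P i) - d i * exp (- Lmul M L b i)) - (- Lmul M L a i * real (P i) - d i * exp (- Lmul M L a i)))"
    unfolding loglik_def by (simp add: sum_subtractf[symmetric] algebra_simps)
  have "(\<Sum>i<N. (- Lmul M L b i * real (P i) - d i * exp (- Lmul M L b i)) - (- Lmul M L a i * real (P i) - d i * exp (- Lmul M L a i)))
     \<le> (\<Sum>i<N. (d i * exp (- Lmul M L a i) - real (P i)) * (Lmul M L b i - Lmul M L a i))"
    using dpos by (intro sum_mono term_ineq(1)) auto
  then show "loglik N M L d P b \<le> loglik N M L d P a + (\<Sum>j<M. grad N M L d P a j * (b j - a j))"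
    using eq grad_sum[where N=N and d=d and M=M and L=L and a=a and P=P and b=b] by linarith
  assume ex: "\<exists>i<N. Lmul M L a i \<noteq> Lmul M L b i"
  have "(\<Sum>i<N. (- Lmul M L b i * real (P i) - d i * exp (- Lmul M L b i)) - (- Lmul M L a i * real (P i) - d i * exp (- Lmul M L a i)))
     < (\<Sum>i<N. (d i * exp (- Lmul M L a i) - real (P i)) * (Lmul M L b i - Lmul M L a i))"
  proof (rule sum_strict_mono_ex1)
    show "finite {..<N}" by simp
    show "\<forall>x\<in>{..<N}. (- Lmul M L b x * real (P x) - d x * exp (- Lmul M L b x)) - (- Lmul M L a x * real (P x) - d x * exp (- Lmul M L a x))
       \<le> (d x * exp (- Lmul M L a x) - real (P x)) * (Lmul M L b x - Lmul M L a x)"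
      using dpos by (intro ballI term_ineq(1)) auto
    obtain i where i: "i < N" "Lmul M L a i \<noteq> Lmul M L b i" using ex by auto
    show "\<exists>x\<in>{..<N}. (- Lmul M L b x * real (P x) - d x * exp (- Lmul M L b x)) - (- Lmul M L a x * real (P x) - d x * exp (- Lmul M L a x))
       < (d x * exp (- Lmul M L a x) - real (P x)) * (Lmul M L b x - Lmul M L a x)"
      using dpos i by (intro bexI[of _ i] term_ineq(2)) auto
  qed
  then show "loglik N M L d P b < loglik N M L d P a + (\<Sum>j<M. grad N M L d P a j * (b j - a j))"
    using eq grad_sum[where N=N and d=d and M=M and L=L and a=a and P=P and b=b] by linarith
qed

lemma denom_pos:
  fixes N M :: nat and L :: "nat \<Rightarrow> nat \<Rightarrow> real" and d :: "nat \<Rightarrow> real" and P :: "nat \<Rightarrow> nat"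
  assumes Npos: "0 < N" and PN: "0 < P (N - 1)"
    and Lnonneg: "\<forall>i<N. \<forall>j<M. 0 \<le> L i j" and LN: "\<forall>j<M. 0 < L (N - 1) j" and j: "j < M"
  shows "0 < (\<Sum>i<N. L i j * real (P i))"
proof -
  have "0 < L (N - 1) j * real (P (N - 1))" using LN PN j by simp
  also have "\<dots> \<le> (\<Sum>i<N. L i j * real (P i))"
    proof (rule member_le_sum[where i="N-1" and f="\<lambda>i. L i j * real (P i)"])
    show "N - 1 \<in> {..<N}" using Npos by simp
  qed (use Lnonneg j in auto)
  finally show ?thesis .
qed

lemma numer_pos:
  fixes N M :: nat and L :: "nat \<Rightarrow> nat \<Rightarrow> real" and d :: "nat \<Rightarrow> real" and P :: "nat \<Rightarrow> nat"
  assumes Npos: "0 < N" and dpos: "\<forall>i<N. 0 < d i"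
    and Lnonneg: "\<forall>i<N. \<forall>j<M. 0 \<le> L i j" and LN: "\<forall>j<M. 0 < L (N - 1) j" and j: "j < M"
  shows "0 < (\<Sum>i<N. L i j * (d i * exp (- Lmul M L a i)))"
proof -
  have "0 < L (N - 1) j * (d (N - 1) * exp (- Lmul M L a (N - 1)))" using LN dpos Npos j by simp
  also have "\<dots> \<le> (\<Sum>i<N. L i j * (d i * exp (- Lmul M L a i)))"
    using Npos Lnonneg dpos j by (intro member_le_sum[where i="N-1" and f="\<lambda>i. L i j * (d i * exp (- Lmul M L a i))"]) (auto intro!: mult_nonneg_nonneg simp: less_imp_le diff_less)
  finally show ?thesis .
qed

lemma grad_split: "grad N M L d P a j = (\<Sum>i<N. L i j * (d i * exp (- Lmul M L a i))) - (\<Sum>i<N. L i j * real (P i))"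
  unfolding grad_def by (simp add: sum_subtractf[symmetric] algebra_simps)

lemma deriv_dir:
  assumes j: "j < M"
  shows "((\<lambda>t. loglik N M L d P (\<alpha>(j := \<alpha> j + t))) has_real_derivative grad N M L d P \<alpha> j) (at 0)"
proof -
  have eq: "(\<lambda>t. loglik N M L d P (\<alpha>(j := \<alpha> j + t))) = (\<lambda>t. \<Sum>i<N. real (P i) * ln (d i) - (Lmul M L \<alpha> i + t * L i j) * real (P i)
             - d i * exp (- (Lmul M L \<alpha> i + t * L i j)) - ln (fact (P i)))"
    unfolding loglik_def using Lmul_upd[OF j] by simp
  have "((\<lambda>t. \<Sum>i<N. real (P i) * ln (d i) - (Lmul M L \<alpha> i + t * L i j) * real (P i)
             - d i * exp (- (Lmul M L \<alpha> i + t * L i j)) - ln (fact (P i))) has_real_derivative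
        (\<Sum>i<N. 0 - (0 + 1 * L i j) * real (P i) - d i * (exp (- (Lmul M L \<alpha> i + 0 * L i j)) * (- (0 + 1 * L i j))) - 0)) (at 0)"
    by (rule DERIV_sum) (auto intro!: derivative_eq_intros)
  moreover have "(\<Sum>i<N. 0 - (0 + 1 * L i j) * real (P i) - d i * (exp (- (Lmul M L \<alpha> i + 0 * L i j)) * (- (0 + 1 * L i j))) - 0)
      = grad N M L d P \<alpha> j"
    unfolding grad_def by (simp add: algebra_simps)
  ultimately show ?thesis using eq by simp
qed

theorem mainTheorem2:
  fixes N M :: nat and L :: "nat \<Rightarrow> nat \<Rightarrow> real" and d :: "nat \<Rightarrow> real" and P :: "nat \<Rightarrow> nat"
  assumes NM: "M \<le> N" and Npos: "0 < N"
    and dpos: "\<forall>i<N. 0 < d i"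
    and PN: "0 < P (N - 1)"
    and rank: "full_col_rank N M L"
    and Lnonneg: "\<forall>i<N. \<forall>j<M. 0 \<le> L i j"
    and LN: "\<forall>j<M. 0 < L (N - 1) j"
  shows
    "(\<forall>a b. is_maximizer N M L d P a \<and> is_maximizer N M L d P b \<longrightarrow> (\<forall>j<M. a j = b j))
   \<and> (\<forall>\<alpha>. nonneg_vec M \<alpha> \<longrightarrow>
        (is_maximizer N M L d P \<alpha> \<longleftrightarrow>
          (\<forall>j<M. \<alpha> j * grad N M L d P \<alpha> j = 0) \<and>
          (\<forall>j<M. \<alpha> j = 0 \<longrightarrow> grad N M L d P \<alpha> j \<le> 0)))
   \<and> (\<forall>\<alpha>. is_maximizer N M L d P \<alpha> \<longrightarrow> (\<forall>j<M. Tmap N M L d P \<alpha> j = \<alpha> j))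
   \<and> (\<forall>\<alpha>. pos_vec M \<alpha> \<longrightarrow> pos_vec M (Tmap N M L d P \<alpha>))
   \<and> (\<forall>\<alpha>0. pos_vec M \<alpha>0 \<longrightarrow> (\<forall>n. pos_vec M ((Tmap N M L d P ^^ n) \<alpha>0)))
   \<and> (\<forall>\<alpha>. pos_vec M \<alpha> \<and> (\<forall>j<M. Tmap N M L d P \<alpha> j = \<alpha> j) \<longrightarrow> is_maximizer N M L d P \<alpha>)"
proof -
  let ?l = "loglik N M L d P" and ?g = "grad N M L d P" and ?T = "Tmap N M L d P"
  have Tfix: "?T a j = a j \<longleftrightarrow> a j * ?g a j = 0" if j: "j < M" for a j
  proof -
    have B: "0 < (\<Sum>i<N. L i j * real (P i))" using denom_pos[where N=N and M=M and L=L and P=P and j=j, OF Npos PN Lnonneg LN j] .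
    show ?thesis unfolding Tmap_def grad_split using B
      by (auto simp: field_simps)
  qed
  have Tpos: "pos_vec M (?T a)" if "pos_vec M a" for a
    unfolding pos_vec_def Tmap_def using that denom_pos[where N=N and M=M and L=L and P=P, OF Npos PN Lnonneg LN] numer_pos[where N=N and M=M and L=L and d=d, OF Npos dpos Lnonneg LN]
    by (auto simp: pos_vec_def)
  have suff: "is_maximizer N M L d P a" if a: "nonneg_vec M a"
      and k1: "\<forall>j<M. a j * ?g a j = 0" and k2: "\<forall>j<M. a j = 0 \<longrightarrow> ?g a j \<le> 0" for a
    unfolding is_maximizer_def
  proof (intro conjI allI impI a)
    fix b assume b: "nonneg_vec M b"
    have "(\<Sum>j<M. ?g a j * (b j - a j)) \<le> (\<Sum>j<M. 0)"
    proof (intro sum_mono)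
      fix j assume "j \<in> {..<M}"
      then have j: "j < M" by simp
      show "?g a j * (b j - a j) \<le> 0"
      proof (cases "a j = 0")
        case True then show ?thesis using k2 j b by (simp add: nonneg_vec_def mult_nonpos_nonneg)
      next
        case False then have "?g a j = 0" using k1 j by auto
        then show ?thesis by simp
      qed
    qed
    then show "?l b \<le> ?l a" using conc(1)[OF dpos, where L=L and P=P and b=b and M=M and a=a] by simp
  qed
  have nec: "(\<forall>j<M. a j * ?g a j = 0) \<and> (\<forall>j<M. a j = 0 \<longrightarrow> ?g a j \<le> 0)"
    if m: "is_maximizer N M L d P a" for a
  proof -
    have a: "nonneg_vec M a" and mx: "\<And>b. nonneg_vec M b \<Longrightarrow> ?l b \<le> ?l a"
      using m unfolding is_maximizer_def by auto
    have le0: "?g a j \<le> 0" and z: "a j > 0 \<Longrightarrow> ?g a j = 0" if j: "j < M" for j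
    proof -
      let ?h = "\<lambda>t. ?l (a(j := a j + t))"
      have D: "(?h has_real_derivative ?g a j) (at 0)" by (rule deriv_dir[OF j])
      have h0: "?h 0 = ?l a" by simp
      have hle: "?h t \<le> ?l a" if "- a j \<le> t" for t
        using that a by (intro mx) (auto simp: nonneg_vec_def)
      show "?g a j \<le> 0"
      proof (rule ccontr)
        assume "\<not> ?g a j \<le> 0"
        then obtain e where e: "e > 0" "\<forall>h>0. h < e \<longrightarrow> ?h 0 < ?h (0 + h)"
          using DERIV_pos_inc_right[OF D] by auto
        have "?h 0 < ?h (e/2)" using e by auto
        moreover have "?h (e/2) \<le> ?l a" using e a j by (intro hle) (auto simp: nonneg_vec_def)
        ultimately show False using h0 by linarith
      qed
      assume ap: "a j > 0"
      show "?g a j = 0"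
      proof (rule ccontr)
        assume "?g a j \<noteq> 0"
        with \<open>?g a j \<le> 0\<close> have "?g a j < 0" by simp
        then obtain e where e: "e > 0" "\<forall>h>0. h < e \<longrightarrow> ?h 0 < ?h (0 - h)"
          using DERIV_neg_dec_left[OF D] by auto
        define h where "h = min (e/2) (a j)"
        have "h > 0" "h < e" "h \<le> a j" using e ap by (auto simp: h_def)
        then have "?h 0 < ?h (0 - h)" using e by auto
        moreover have "?h (0 - h) \<le> ?l a" using \<open>h \<le> a j\<close> by (intro hle) auto
        ultimately show False using h0 by linarith
      qed
    qed
    show ?thesis
    proof (intro conjI allI impI)
      fix j assume j: "j < M"
      show "a j * ?g a j = 0"
        using z[OF j] a j by (cases "a j > 0") (auto simp: nonneg_vec_def)
    next
      fix j assume "j < M" "a j = 0" then show "?g a j \<le> 0" using le0 by simp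
    qed
  qed
  have uniq: "\<forall>j<M. a j = b j" if ma: "is_maximizer N M L d P a" and mb: "is_maximizer N M L d P b" for a b
  proof -
    have eqi: "\<forall>i<N. Lmul M L a i = Lmul M L b i"
    proof (rule ccontr)
      assume "\<not> ?thesis"
      then have ex: "\<exists>i<N. Lmul M L a i \<noteq> Lmul M L b i" by auto
      have s: "(\<Sum>j<M. ?g a j * (b j - a j)) \<le> (\<Sum>j<M. 0)"
      proof (intro sum_mono)
        fix j assume "j \<in> {..<M}"
        then have j: "j < M" by simp
        have k: "a j * ?g a j = 0" "a j = 0 \<longrightarrow> ?g a j \<le> 0" using nec[OF ma] j by auto
        have "0 \<le> b j" "0 \<le> a j" using mb ma j by (auto simp: is_maximizer_def nonneg_vec_def)
        show "?g a j * (b j - a j) \<le> 0"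
        proof (cases "a j = 0")
          case True then show ?thesis using k \<open>0 \<le> b j\<close> by (simp add: mult_nonpos_nonneg)
        next
          case False then show ?thesis using k by simp
        qed
      qed
      have "?l b < ?l a" using conc(2)[OF dpos ex, where P=P] s by simp
      moreover have "?l a \<le> ?l b" using ma mb by (auto simp: is_maximizer_def)
      ultimately show False by simp
    qed
    have "\<forall>i<N. Lmul M L (\<lambda>k. a k - b k) i = 0" using eqi by (simp add: Lmul_diff)
    then have "\<forall>j<M. a j - b j = 0" using rank unfolding full_col_rank_def by blast
    then show ?thesis by simp
  qed
  have iter: "pos_vec M ((?T ^^ n) a0)" if "pos_vec M a0" for a0 n
    by (induction n) (auto simp: that Tpos)
  have c1: "\<forall>a b. is_maximizer N M L d P a \<and> is_maximizer N M L d P b \<longrightarrow> (\<forall>j<M. a j = b j)"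
    using uniq by blast
  have c2: "\<forall>\<alpha>. nonneg_vec M \<alpha> \<longrightarrow> (is_maximizer N M L d P \<alpha> \<longleftrightarrow>
      (\<forall>j<M. \<alpha> j * ?g \<alpha> j = 0) \<and> (\<forall>j<M. \<alpha> j = 0 \<longrightarrow> ?g \<alpha> j \<le> 0))"
    using nec suff by blast
  have c3: "\<forall>\<alpha>. is_maximizer N M L d P \<alpha> \<longrightarrow> (\<forall>j<M. ?T \<alpha> j = \<alpha> j)"
    using nec Tfix by blast
  have c4: "\<forall>\<alpha>. pos_vec M \<alpha> \<longrightarrow> pos_vec M (?T \<alpha>)" using Tpos by blast
  have c5: "\<forall>\<alpha>0. pos_vec M \<alpha>0 \<longrightarrow> (\<forall>n. pos_vec M ((?T ^^ n) \<alpha>0))" using iter by blast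
  have c6: "\<forall>\<alpha>. pos_vec M \<alpha> \<and> (\<forall>j<M. ?T \<alpha> j = \<alpha> j) \<longrightarrow> is_maximizer N M L d P \<alpha>"
  proof (intro allI impI)
    fix \<alpha> assume h: "pos_vec M \<alpha> \<and> (\<forall>j<M. ?T \<alpha> j = \<alpha> j)"
    have nn: "nonneg_vec M \<alpha>" using h by (auto simp: pos_vec_def nonneg_vec_def less_imp_le)
    have k1: "\<forall>j<M. \<alpha> j * ?g \<alpha> j = 0" using h Tfix by blast
    have k2: "\<forall>j<M. \<alpha> j = 0 \<longrightarrow> ?g \<alpha> j \<le> 0" using h by (auto simp: pos_vec_def)
    show "is_maximizer N M L d P \<alpha>" by (rule suff[OF nn k1 k2])
  qed
  show ?thesis using c1 c2 c3 c4 c5 c6 by blast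
qed

end
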